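(* Let $(P,\leq,{}',R,0,1)$ be a conditionally operator residuated poset satisfying operator divisibility, and assume $R(x,y)=LU(x',y)$ for all $x,y\in P$. Then $(P,\leq,{}',0,1)$ is a generalized orthomodular poset.
   Context: For a poset $(P,\leq)$ and $A\subseteq P$: $L(A):=\{x\in P\mid x\leq a\text{ for all }a\in A\}$, $U(A):=\{x\in P\mid a\leq x\text{ for all }a\in A\}$; $L(a,b)$ means $L(\{a,b\})$, $L(a,B)$ means $L(\{a\}\cup B)$, $LU(A)=L(U(A))$. An orthoposet is a bounded poset $(P,\leq,{}',0,1)$ with a unary operation $'$ that is an antitone involution ($x''=x$, and $x\leq y\Rightarrow y'\leq x'$) and a complementation ($L(x,x')=\{0\}$, $U(x,x')=\{1\}$). A generalized orthomodular poset is an orthoposet satisfying: for all $x,y$, $x\leq y$ implies $U(y)=U(x,L(x',y))$. A conditionally operator residuated poset is a tuple $(P,\leq,{}',R,0,1)$ where $(P,\leq,0,1)$ is a bounded poset, $'$ is an antitone unary operation ($x\leq y\Rightarrow y'\leq x'$), and $R:P^2\to 2^P$ satisfies for all $x,y,z\in P$: (i) if $x'\leq y$ then $L(x,y)\subseteq L(z)$ implies $L(x)\subseteq R(y,z)$; (ii) if $z\leq y$ then $L(x)\subseteq R(y,z)$ implies $L(x,y)\subseteq L(z)$; (iii) $R(x,0)=L(x')$; (iv) $R(x'',x)=P$. It satisfies operator divisibility if $x\leq y$ implies $L(y,U(R(y,x)))=L(x)$. *)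

theory Defs
  imports Main
begin

text \<open>The poset P is the whole carrier of a type of classes order_bot and order_top
  (order \<le>, least element bot = 0, greatest element top = 1).\<close>

definition Lset :: "'a::order set \<Rightarrow> 'a set" where
  "Lset A = {x. \<forall>a\<in>A. x \<le> a}"

definition Uset :: "'a::order set \<Rightarrow> 'a set" where
  "Uset A = {x. \<forall>a\<in>A. a \<le> x}"

definition antitone_op :: "('a::order \<Rightarrow> 'a) \<Rightarrow> bool" where
  "antitone_op c \<longleftrightarrow> (\<forall>x y. x \<le> y \<longrightarrow> c y \<le> c x)"

definition orthoposet :: "('a::{order_bot,order_top} \<Rightarrow> 'a) \<Rightarrow> bool" where
  "orthoposet c \<longleftrightarrow> antitone_op c \<and> (\<forall>x. c (c x) = x)
     \<and> (\<forall>x. Lset {x, c x} = {bot}) \<and> (\<forall>x. Uset {x, c x} = {top})"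

definition generalized_orthomodular :: "('a::{order_bot,order_top} \<Rightarrow> 'a) \<Rightarrow> bool" where
  "generalized_orthomodular c \<longleftrightarrow> orthoposet c \<and>
     (\<forall>x y. x \<le> y \<longrightarrow> Uset {y} = Uset ({x} \<union> Lset {c x, y}))"

definition cond_op_residuated ::
  "('a::{order_bot,order_top} \<Rightarrow> 'a) \<Rightarrow> ('a \<Rightarrow> 'a \<Rightarrow> 'a set) \<Rightarrow> bool" where
  "cond_op_residuated c R \<longleftrightarrow> antitone_op c \<and>
     (\<forall>x y z. c x \<le> y \<longrightarrow> Lset {x, y} \<subseteq> Lset {z} \<longrightarrow> Lset {x} \<subseteq> R y z) \<and>
     (\<forall>x y z. z \<le> y \<longrightarrow> Lset {x} \<subseteq> R y z \<longrightarrow> Lset {x, y} \<subseteq> Lset {z}) \<and>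
     (\<forall>x. R x bot = Lset {c x}) \<and>
     (\<forall>x. R (c (c x)) x = UNIV)"

definition operator_divisibility ::
  "('a::{order_bot,order_top} \<Rightarrow> 'a) \<Rightarrow> ('a \<Rightarrow> 'a \<Rightarrow> 'a set) \<Rightarrow> bool" where
  "operator_divisibility c R \<longleftrightarrow>
     (\<forall>x y. x \<le> y \<longrightarrow> Lset ({y} \<union> Uset (R y x)) = Lset {x})"

end

theory Submission
  imports Defs
begin

theorem mainTheorem2:
  fixes c :: "'a::{order_bot,order_top} \<Rightarrow> 'a" and R :: "'a \<Rightarrow> 'a \<Rightarrow> 'a set"
  assumes "cond_op_residuated c R"
    and "operator_divisibility c R"
    and "\<forall>x y. R x y = Lset (Uset {c x, y})"
  shows "generalized_orthomodular c"
proof -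
  have anti: "\<And>x y. x \<le> y \<Longrightarrow> c y \<le> c x" using assms(1)
    unfolding cond_op_residuated_def antitone_op_def by blast
  have i: "\<And>x y z. c x \<le> y \<Longrightarrow> Lset {x, y} \<subseteq> Lset {z} \<Longrightarrow> Lset {x} \<subseteq> R y z"
    using assms(1) unfolding cond_op_residuated_def by blast
  have ii: "\<And>x y z. z \<le> y \<Longrightarrow> Lset {x} \<subseteq> R y z \<Longrightarrow> Lset {x, y} \<subseteq> Lset {z}"
    using assms(1) unfolding cond_op_residuated_def by blast
  have iii: "\<And>x. R x bot = Lset {c x}"
    using assms(1) unfolding cond_op_residuated_def by blast
  have iv: "\<And>x. R (c (c x)) x = UNIV"
    using assms(1) unfolding cond_op_residuated_def by blast
  have div: "\<And>x y. x \<le> y \<Longrightarrow> Lset ({y} \<union> Uset (R y x)) = Lset {x}"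
    using assms(2) unfolding operator_divisibility_def by blast
  have Rd: "\<And>x y. R x y = Lset (Uset {c x, y})" using assms(3) by blast
  have UL: "\<And>S. Uset (Lset (Uset S)) = Uset S"
    unfolding Lset_def Uset_def by auto
  have Lx: "\<And>x. Lset {x, c x} = {bot}"
  proof -
    fix x
    have "Lset {c x} \<subseteq> R x bot" using iii by simp
    hence "Lset {c x, x} \<subseteq> Lset {bot}" using ii[of bot x "c x"] by simp
    thus "Lset {x, c x} = {bot}" unfolding Lset_def by (auto intro: antisym)
  qed
  have le2: "\<And>x. x \<le> c (c x)"
  proof -
    fix x
    have "Lset {x, c x} \<subseteq> Lset {bot}" using Lx unfolding Lset_def by auto
    hence "Lset {x} \<subseteq> R (c x) bot" using i[of x "c x" bot] by simp
    hence "x \<in> Lset {c (c x)}" using iii unfolding Lset_def by auto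
    thus "x \<le> c (c x)" unfolding Lset_def by auto
  qed
  have inv: "\<And>x. c (c x) = x"
  proof -
    fix x
    have e: "Lset ({c (c x)} \<union> Uset (R (c (c x)) x)) = Lset {x}" using div le2 by blast
    have "Uset (R (c (c x)) x) = {top}" using iv unfolding Uset_def
      by (auto intro: antisym)
    hence "c (c x) \<in> Lset ({c (c x)} \<union> Uset (R (c (c x)) x))" unfolding Lset_def by auto
    hence "c (c x) \<le> x" using e unfolding Lset_def by auto
    thus "c (c x) = x" using le2 by (auto intro: antisym)
  qed
  have Ux: "\<And>x. Uset {x, c x} = {top}"
  proof -
    fix x
    have "Lset (Uset {c x, x}) = UNIV" using iv[of x] Rd inv by simp
    hence "top \<in> Lset (Uset {c x, x})" by simp
    thus "Uset {x, c x} = {top}" unfolding Lset_def Uset_def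
      by (auto intro: antisym)
  qed
  have om: "\<And>x y. x \<le> y \<Longrightarrow> Uset {y} = Uset ({x} \<union> Lset {c x, y})"
  proof -
    fix x y :: 'a assume xy: "x \<le> y"
    have e: "Lset ({c x} \<union> Uset {x, c y}) = Lset {c y}"
    proof -
      have "Lset ({c x} \<union> Uset (R (c x) (c y))) = Lset {c y}" using div[OF anti[OF xy]] .
      moreover have "R (c x) (c y) = Lset (Uset {x, c y})" using Rd[of "c x" "c y"] inv[of x] by (simp only:)
      ultimately show ?thesis using UL[of "{x, c y}"] by (simp only:)
    qed
    show "Uset {y} = Uset ({x} \<union> Lset {c x, y})"
    proof
      show "Uset {y} \<subseteq> Uset ({x} \<union> Lset {c x, y})"
        using xy unfolding Uset_def Lset_def by (auto intro: order_trans)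
    next
      show "Uset ({x} \<union> Lset {c x, y}) \<subseteq> Uset {y}"
      proof
        fix z assume z: "z \<in> Uset ({x} \<union> Lset {c x, y})"
        have "c z \<in> Lset ({c x} \<union> Uset {x, c y})"
          unfolding Lset_def
        proof (safe)
          show "c z \<le> c x" using z anti unfolding Uset_def by auto
        next
          fix u assume u: "u \<in> Uset {x, c y}"
          have "c u \<le> c x" using u anti unfolding Uset_def by auto
          moreover have "c u \<le> y"
          proof -
            have "c y \<le> u" using u unfolding Uset_def by auto
            hence "c u \<le> c (c y)" by (rule anti)
            thus ?thesis by (simp only: inv)
          qed
          ultimately have "c u \<in> Lset {c x, y}" unfolding Lset_def by auto
          hence "c u \<le> z" using z unfolding Uset_def by auto
          hence "c z \<le> c (c u)" using anti by blast
          thus "c z \<le> u" using inv by simp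
        qed
        hence "c z \<le> c y" using e unfolding Lset_def by auto
        hence "c (c y) \<le> c (c z)" by (rule anti)
        hence "y \<le> z" by (simp only: inv)
        thus "z \<in> Uset {y}" unfolding Uset_def by auto
      qed
    qed
  qed
  show ?thesis unfolding generalized_orthomodular_def orthoposet_def antitone_op_def
    using anti inv Lx Ux om by blast
qed

end
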